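(* For $i=1,2$ let $R_i$ be a unital ring whose additive group is finitely generated and torsion-free, and let $M_i\subseteq R_i^\times$ be a submonoid. Suppose there are $\mathbb Q$-algebra isomorphisms $\varphi_1\colon\mathbb QR_1\to\mathbb QR_2$ and $\varphi_2\colon\mathbb QR_2\to\mathbb QR_1$ with $\varphi_1(\langle M_1\rangle)\subseteq\langle M_2\rangle$ and $\varphi_2(\langle M_2\rangle)\subseteq\langle M_1\rangle$. If (S') every $\mathbb Q$-algebra automorphism $\psi$ of $\mathbb QR_1$ with $\psi(\langle M_1\rangle)\subseteq\langle M_1\rangle$ satisfies $\psi(\langle M_1\rangle)=\langle M_1\rangle$, then $\varphi_1(\langle M_1\rangle)=\langle M_2\rangle$ and $\varphi_2(\langle M_2\rangle)=\langle M_1\rangle$, so that the actions $\langle M_1\rangle\curvearrowright\mathbb QR_1$ and $\langle M_2\rangle\curvearrowright\mathbb QR_2$ by left multiplication are isomorphic. If (N) $M_i=\langle M_i\rangle\cap\mathcal O_i$ for $i=1,2$, and (S) every $\mathbb Q$-algebra automorphism $\psi$ of $\mathbb QR_1$ with $\psi(M_1)\subseteq M_1$ satisfies $\psi(M_1)=M_1$, then $\varphi_1(M_1)=M_2$ and $\varphi_2(M_2)=M_1$; consequently the actions $M_1\curvearrowright{\rm span}_{\mathbb Z}(M_1)$ and $M_2\curvearrowright{\rm span}_{\mathbb Z}(M_2)$ by left multiplication are isomorphic, and if each $\mathcal O_i$ is closed under addition and invariant under left multiplication by $M_i$, then $M_1\curvearrowright\mathcal O_1$ and $M_2\curvearrowright\mathcal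 O_2$ are isomorphic.
   Context: $\mathbb QR=\mathbb Q\otimes_{\mathbb Z}R$. $R^\times$ is the monoid of left regular elements of $R$; $\langle M\rangle$ is the subgroup of $(\mathbb QR)^*$ generated by $M$. $\mathcal O_i$ is the set of elements of $\mathbb QR_i$ integral over $\mathbb Z$. Two actions $\sigma\colon S\curvearrowright A$, $\tau\colon T\curvearrowright B$ of monoids on abelian groups are isomorphic if there are a monoid isomorphism $\mathfrak t\colon S\to T$ and a group isomorphism $\mathfrak b\colon A\to B$ with $\mathfrak b(\sigma_s(x))=\tau_{\mathfrak t(s)}(\mathfrak b(x))$. *)

theory Defs
  imports Main
begin

text \<open>
  The rational envelope QR = Q tensor R of a ring R whose additive group is finitely
  generated and torsion-free is modelled as an ambient ring type 'a in which every
  nonzero integer is invertible (this is exactly a unital Q-algebra structure, which is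
  then unique), and R is a subring of 'a that is a finitely generated additive group
  and spans 'a over Q.  For torsion-free R the canonical map Q tensor R to 'a is then an
  isomorphism, so R is identified with its image in QR, as in the paper.
\<close>

definition Q_algebra :: "'a::ring_1 itself \<Rightarrow> bool" where
  "Q_algebra _ \<longleftrightarrow>
     (\<forall>n::int. n \<noteq> 0 \<longrightarrow> (\<exists>y::'a. of_int n * y = 1 \<and> y * of_int n = 1))"

definition zspan :: "'a::ring_1 set \<Rightarrow> 'a set" where
  "zspan S = {(\<Sum>x\<in>F. of_int (c x) * x) | F c. finite F \<and> F \<subseteq> S}"

definition order_in :: "'a::ring_1 set \<Rightarrow> bool" where
  "order_in R \<longleftrightarrow>
     1 \<in> R \<and> (\<forall>x\<in>R. \<forall>y\<in>R. x + y \<in> R \<and> x * y \<in> R \<and> - x \<in> R)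
     \<and> (\<exists>F. finite F \<and> F \<subseteq> R \<and> zspan F = R)
     \<and> (\<forall>a::'a. \<exists>n::int. n \<noteq> 0 \<and> of_int n * a \<in> R)"

definition left_regular :: "'a::ring_1 set \<Rightarrow> 'a set" where
  "left_regular R = {r \<in> R. \<forall>x\<in>R. r * x = 0 \<longrightarrow> x = 0}"

definition submonoid :: "'a::ring_1 set \<Rightarrow> bool" where
  "submonoid M \<longleftrightarrow> 1 \<in> M \<and> (\<forall>x\<in>M. \<forall>y\<in>M. x * y \<in> M)"

inductive_set gen_group :: "'a::ring_1 set \<Rightarrow> 'a set" for M where
  gen_base: "x \<in> M \<Longrightarrow> x \<in> gen_group M"
| gen_one: "1 \<in> gen_group M"
| gen_mult: "x \<in> gen_group M \<Longrightarrow> y \<in> gen_group M \<Longrightarrow> x * y \<in> gen_group M"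
| gen_inv: "x \<in> gen_group M \<Longrightarrow> x * y = 1 \<Longrightarrow> y * x = 1 \<Longrightarrow> y \<in> gen_group M"

definition integral_elems :: "'a::ring_1 set" where
  "integral_elems = {x. \<exists>(n::nat) (c::nat \<Rightarrow> int). x ^ n + (\<Sum>i<n. of_int (c i) * x ^ i) = 0}"

text \<open>Q-algebra isomorphisms between Q-algebras are exactly unital ring isomorphisms
  (additive maps between Q-vector spaces are automatically Q-linear).\<close>
definition Qalg_iso :: "('a::ring_1 \<Rightarrow> 'b::ring_1) \<Rightarrow> bool" where
  "Qalg_iso f \<longleftrightarrow> bij f \<and> f 1 = 1 \<and> (\<forall>x y. f (x + y) = f x + f y)
                  \<and> (\<forall>x y. f (x * y) = f x * f y)"

definition lmult_actions_iso :: "'a::ring_1 set \<Rightarrow> 'a set \<Rightarrow> 'b::ring_1 set \<Rightarrow> 'b set \<Rightarrow> bool" where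
  "lmult_actions_iso S A T B \<longleftrightarrow>
     (\<exists>t b. bij_betw t S T \<and> t 1 = 1 \<and> (\<forall>s\<in>S. \<forall>s'\<in>S. t (s * s') = t s * t s')
          \<and> bij_betw b A B \<and> (\<forall>x\<in>A. \<forall>y\<in>A. b (x + y) = b x + b y)
          \<and> (\<forall>s\<in>S. \<forall>x\<in>A. b (s * x) = t s * b x))"

end

theory Submission
  imports Defs
begin

lemma qi_basic:
  assumes "Qalg_iso f"
  shows "f 0 = 0" "f (- x) = - f x" "f (x + y) = f x + f y" "f (x * y) = f x * f y"
    "f 1 = 1" "inj f" "surj f"
proof -
  have add: "\<And>x y. f (x + y) = f x + f y" and mul: "\<And>x y. f (x * y) = f x * f y"
    using assms unfolding Qalg_iso_def by auto
  show "inj f" "surj f" "f 1 = 1" using assms unfolding Qalg_iso_def bij_def by auto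
  have "f 0 = f 0 + f 0" using add[of 0 0] by simp
  then show z: "f 0 = 0" by simp
  have "f x + f (- x) = 0" using add[of x "-x"] z by simp
  then show "f (- x) = - f x" by (simp add: eq_neg_iff_add_eq_0 add.commute)
  show "f (x + y) = f x + f y" "f (x * y) = f x * f y" using add mul by auto
qed

lemma qi_sum:
  assumes "Qalg_iso f"
  shows "f (sum g F) = (\<Sum>x\<in>F. f (g x))"
proof (cases "finite F")
  case True
  then show ?thesis by (induction F rule: finite_induct) (auto simp: qi_basic[OF assms])
qed (simp add: qi_basic[OF assms])

lemma qi_of_nat:
  assumes "Qalg_iso f"
  shows "f (of_nat n) = of_nat n"
  by (induction n) (auto simp: qi_basic[OF assms])

lemma qi_of_int:
  assumes "Qalg_iso f"
  shows "f (of_int n) = of_int n"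
proof (rule int_cases2[of n])
  fix m assume "n = int m"
  then show ?thesis using qi_of_nat[OF assms, of m] by simp
next
  fix m assume "n = - int m"
  then show ?thesis using qi_of_nat[OF assms, of m] qi_basic(2)[OF assms, of "of_nat m"] by simp
qed

lemma qi_pow:
  assumes "Qalg_iso f"
  shows "f (x ^ n) = f x ^ n"
  by (induction n) (auto simp: qi_basic[OF assms])

lemma qi_poly:
  assumes "Qalg_iso f"
  shows "f (x ^ n + (\<Sum>i<n. of_int (c i) * x ^ i)) = f x ^ n + (\<Sum>i<n. of_int (c i) * f x ^ i)"
  by (simp add: qi_basic[OF assms] qi_sum[OF assms] qi_of_int[OF assms] qi_pow[OF assms])

lemma qi_integral_iff:
  assumes "Qalg_iso f"
  shows "f x \<in> integral_elems \<longleftrightarrow> x \<in> integral_elems"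
proof -
  have "(f x ^ n + (\<Sum>i<n. of_int (c i) * f x ^ i) = 0) \<longleftrightarrow>
           (x ^ n + (\<Sum>i<n. of_int (c i) * x ^ i) = 0)" for n c
  proof -
    have "(f (x ^ n + (\<Sum>i<n. of_int (c i) * x ^ i)) = f 0) \<longleftrightarrow>
           (x ^ n + (\<Sum>i<n. of_int (c i) * x ^ i) = 0)"
      by (rule inj_eq[OF qi_basic(6)[OF assms]])
    then show ?thesis by (simp only: qi_poly[OF assms] qi_basic(1)[OF assms])
  qed
  then show ?thesis unfolding integral_elems_def by simp
qed

lemma qi_integral_img:
  assumes "Qalg_iso f"
  shows "f ` integral_elems = integral_elems"
proof
  show "f ` integral_elems \<subseteq> integral_elems" using qi_integral_iff[OF assms] by auto
  show "integral_elems \<subseteq> f ` integral_elems"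
  proof
    fix y :: 'b assume y: "y \<in> integral_elems"
    obtain x where "y = f x" using qi_basic(7)[OF assms] by (metis surjD)
    then show "y \<in> f ` integral_elems" using y qi_integral_iff[OF assms] by auto
  qed
qed

lemma qi_zspan_img:
  assumes "Qalg_iso f"
  shows "f ` zspan S = zspan (f ` S)"
proof
  show "f ` zspan S \<subseteq> zspan (f ` S)"
  proof
    fix y assume "y \<in> f ` zspan S"
    then obtain F c where F: "finite F" "F \<subseteq> S" and y: "y = f (\<Sum>x\<in>F. of_int (c x) * x)"
      unfolding zspan_def by auto
    have inj: "inj_on f F" using qi_basic(6)[OF assms] by (meson inj_on_subset subset_UNIV)
    have "y = (\<Sum>x\<in>F. of_int (c x) * f x)"
      using y by (simp add: qi_sum[OF assms] qi_basic[OF assms] qi_of_int[OF assms])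
    also have "\<dots> = (\<Sum>z\<in>f ` F. of_int (c (inv_into F f z)) * z)"
      using inj by (simp add: sum.reindex)
    finally have yy: "y = (\<Sum>z\<in>f ` F. of_int (c (inv_into F f z)) * z)" .
    show "y \<in> zspan (f ` S)" unfolding zspan_def
      apply (rule CollectI)
      apply (rule exI[of _ "f ` F"])
      apply (rule exI[of _ "\<lambda>z. c (inv_into F f z)"])
      using yy F by auto
  qed
  show "zspan (f ` S) \<subseteq> f ` zspan S"
  proof
    fix y assume "y \<in> zspan (f ` S)"
    then obtain G c where G: "finite G" "G \<subseteq> f ` S" and y: "y = (\<Sum>x\<in>G. of_int (c x) * x)"
      unfolding zspan_def by auto
    obtain U where U: "U \<subseteq> S" "inj_on f U" "G = f ` U" using G(2) subset_image_inj by metis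
    have fU: "finite U" using U G(1) finite_image_iff by metis
    have "y = (\<Sum>x\<in>U. of_int (c (f x)) * f x)" using y U by (simp add: sum.reindex)
    also have "\<dots> = f (\<Sum>x\<in>U. of_int (c (f x)) * x)"
      by (simp add: qi_sum[OF assms] qi_basic[OF assms] qi_of_int[OF assms])
    finally have yy: "y = f (\<Sum>x\<in>U. of_int (c (f x)) * x)" .
    have "(\<Sum>x\<in>U. of_int (c (f x)) * x) \<in> zspan S" unfolding zspan_def
      apply (rule CollectI)
      apply (rule exI[of _ U])
      apply (rule exI[of _ "\<lambda>x. c (f x)"])
      using U fU by auto
    then show "y \<in> f ` zspan S" using yy by blast
  qed
qed

lemma qi_comp:
  assumes "Qalg_iso f" "Qalg_iso g"
  shows "Qalg_iso (g \<circ> f)"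
  using assms unfolding Qalg_iso_def by (auto intro: bij_comp)

lemma qi_action:
  assumes "Qalg_iso f" "f ` S = T" "f ` A = B"
  shows "lmult_actions_iso S A T B"
  unfolding lmult_actions_iso_def
proof (intro exI[of _ f] conjI)
  have inj: "\<And>X. inj_on f X" using qi_basic(6)[OF assms(1)] by (meson inj_on_subset subset_UNIV)
  show "bij_betw f S T" "bij_betw f A B" using inj assms by (auto simp: bij_betw_def)
qed (auto simp: qi_basic[OF assms(1)])

lemma img_trick:
  assumes "inj g" "g ` (f ` X) = X" "f ` X \<subseteq> Y" "g ` Y \<subseteq> X"
  shows "f ` X = Y \<and> g ` Y = X"
proof -
  have "X \<subseteq> g ` Y" using assms(2,3) by blast
  then have gY: "g ` Y = X" using assms(4) by blast
  then have "g ` (f ` X) = g ` Y" using assms(2) by simp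
  then have "f ` X = Y" using assms(1) by (simp add: inj_image_eq_iff)
  then show ?thesis using gY by simp
qed

theorem corollary5p2:
  fixes R1 M1 :: "'a::ring_1 set" and R2 M2 :: "'b::ring_1 set"
    and \<phi>1 :: "'a \<Rightarrow> 'b" and \<phi>2 :: "'b \<Rightarrow> 'a"
  assumes QA1: "Q_algebra TYPE('a)" and QA2: "Q_algebra TYPE('b)"
    and R1: "order_in R1" and R2: "order_in R2"
    and M1: "submonoid M1" "M1 \<subseteq> left_regular R1"
    and M2: "submonoid M2" "M2 \<subseteq> left_regular R2"
    and phi1: "Qalg_iso \<phi>1" and phi2: "Qalg_iso \<phi>2"
    and sub1: "\<phi>1 ` gen_group M1 \<subseteq> gen_group M2"
    and sub2: "\<phi>2 ` gen_group M2 \<subseteq> gen_group M1"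
  shows
    "((\<forall>\<psi>::'a \<Rightarrow> 'a. Qalg_iso \<psi> \<and> \<psi> ` gen_group M1 \<subseteq> gen_group M1
          \<longrightarrow> \<psi> ` gen_group M1 = gen_group M1)
      \<longrightarrow> \<phi>1 ` gen_group M1 = gen_group M2 \<and> \<phi>2 ` gen_group M2 = gen_group M1
        \<and> lmult_actions_iso (gen_group M1) (UNIV :: 'a set) (gen_group M2) (UNIV :: 'b set))
   \<and> ((M1 = gen_group M1 \<inter> integral_elems \<and> M2 = gen_group M2 \<inter> integral_elems
       \<and> (\<forall>\<psi>::'a \<Rightarrow> 'a. Qalg_iso \<psi> \<and> \<psi> ` M1 \<subseteq> M1 \<longrightarrow> \<psi> ` M1 = M1))
      \<longrightarrow> \<phi>1 ` M1 = M2 \<and> \<phi>2 ` M2 = M1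
        \<and> lmult_actions_iso M1 (zspan M1) M2 (zspan M2)
        \<and> ((\<forall>x\<in>(integral_elems::'a set). \<forall>y\<in>integral_elems. x + y \<in> integral_elems)
            \<and> (\<forall>m\<in>M1. \<forall>x\<in>(integral_elems::'a set). m * x \<in> integral_elems)
            \<and> (\<forall>x\<in>(integral_elems::'b set). \<forall>y\<in>integral_elems. x + y \<in> integral_elems)
            \<and> (\<forall>m\<in>M2. \<forall>x\<in>(integral_elems::'b set). m * x \<in> integral_elems)
           \<longrightarrow> lmult_actions_iso M1 (integral_elems::'a set) M2 (integral_elems::'b set)))"
proof (intro conjI impI)
  have psi: "Qalg_iso (\<phi>2 \<circ> \<phi>1)" by (rule qi_comp[OF phi1 phi2])
  have inj2: "inj \<phi>2" by (rule qi_basic(6)[OF phi2])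
  have surj1: "\<phi>1 ` UNIV = UNIV" using qi_basic(7)[OF phi1] by simp
  assume S': "\<forall>\<psi>::'a \<Rightarrow> 'a. Qalg_iso \<psi> \<and> \<psi> ` gen_group M1 \<subseteq> gen_group M1
          \<longrightarrow> \<psi> ` gen_group M1 = gen_group M1"
  have "(\<phi>2 \<circ> \<phi>1) ` gen_group M1 \<subseteq> gen_group M1" using sub1 sub2 unfolding image_comp[symmetric] by blast
  then have "(\<phi>2 \<circ> \<phi>1) ` gen_group M1 = gen_group M1" using S' psi by blast
  then have E: "\<phi>1 ` gen_group M1 = gen_group M2 \<and> \<phi>2 ` gen_group M2 = gen_group M1"
    using img_trick[OF inj2 _ sub1 sub2] by (simp only: image_comp)
  then show "\<phi>1 ` gen_group M1 = gen_group M2" "\<phi>2 ` gen_group M2 = gen_group M1" by auto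
  show "lmult_actions_iso (gen_group M1) (UNIV :: 'a set) (gen_group M2) (UNIV :: 'b set)"
    using qi_action[OF phi1 _ surj1] E by blast
next
  have psi: "Qalg_iso (\<phi>2 \<circ> \<phi>1)" by (rule qi_comp[OF phi1 phi2])
  have inj2: "inj \<phi>2" by (rule qi_basic(6)[OF phi2])
  assume H: "M1 = gen_group M1 \<inter> integral_elems \<and> M2 = gen_group M2 \<inter> integral_elems
       \<and> (\<forall>\<psi>::'a \<Rightarrow> 'a. Qalg_iso \<psi> \<and> \<psi> ` M1 \<subseteq> M1 \<longrightarrow> \<psi> ` M1 = M1)"
  have s1: "\<phi>1 ` M1 \<subseteq> M2"
  proof
    fix y assume "y \<in> \<phi>1 ` M1"
    then obtain x where x: "x \<in> M1" "y = \<phi>1 x" by auto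
    have "x \<in> gen_group M1" "x \<in> integral_elems" using x H by blast+
    then have "y \<in> gen_group M2" "y \<in> integral_elems" using x sub1 qi_integral_iff[OF phi1] by auto
    then show "y \<in> M2" using H by blast
  qed
  have s2: "\<phi>2 ` M2 \<subseteq> M1"
  proof
    fix y assume "y \<in> \<phi>2 ` M2"
    then obtain x where x: "x \<in> M2" "y = \<phi>2 x" by auto
    have "x \<in> gen_group M2" "x \<in> integral_elems" using x H by blast+
    then have "y \<in> gen_group M1" "y \<in> integral_elems" using x sub2 qi_integral_iff[OF phi2] by auto
    then show "y \<in> M1" using H by blast
  qed
  have "(\<phi>2 \<circ> \<phi>1) ` M1 \<subseteq> M1" using s1 s2 unfolding image_comp[symmetric] by blast
  then have "(\<phi>2 \<circ> \<phi>1) ` M1 = M1" using H psi by blast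
  then have E: "\<phi>1 ` M1 = M2 \<and> \<phi>2 ` M2 = M1"
    using img_trick[OF inj2 _ s1 s2] by (simp only: image_comp)
  then show "\<phi>1 ` M1 = M2" "\<phi>2 ` M2 = M1" by auto
  show "lmult_actions_iso M1 (zspan M1) M2 (zspan M2)"
  proof (rule qi_action[OF phi1])
    show "\<phi>1 ` M1 = M2" using E by simp
    show "\<phi>1 ` zspan M1 = zspan M2" using E qi_zspan_img[OF phi1, of M1] by simp
  qed
  show "lmult_actions_iso M1 (integral_elems::'a set) M2 (integral_elems::'b set)"
  proof (rule qi_action[OF phi1])
    show "\<phi>1 ` M1 = M2" using E by simp
    show "\<phi>1 ` integral_elems = integral_elems" using qi_integral_img[OF phi1] by simp
  qed
qed

end
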